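(* Let $1\le k\le n-1$. The complex $\Delta^{NC}_{k,n}$ has the following properties. (i) The map $i\mapsto n+1-i$ on $[n]$ induces (by acting on $k$-subsets) an automorphism of $\Delta^{NC}_{k,n}$. (ii) The map $I\mapsto [n]\setminus I$ (viewing vectors as subsets) induces an isomorphism $\Delta^{NC}_{k,n}\to\Delta^{NC}_{n-k,n}$; i.e. $I,J\in V_{k,n}$ are noncrossing iff $[n]\setminus I$, $[n]\setminus J\in V_{n-k,n}$ are noncrossing. (iii) For $I\ne J\in V_{k,n}$, let $S=I\triangle J$, $m=|I\setminus J|=|J\setminus I|$, and relabel $S$ order-preservingly as $[2m]$; then $I\setminus J$ and $J\setminus I$ become elements of $V_{m,2m}$, and $I,J$ are noncrossing in $V_{k,n}$ iff these two elements of $V_{m,2m}$ are noncrossing. (iv) For $b\in[n]$, the restriction of $\Delta^{NC}_{k,n}$ to the vertices $I$ with $b\in I$ is isomorphic to $\Delta^{NC}_{k-1,n-1}$, and the restriction to vertices with $b\notin I$ is isomorphic to $\Delta^{NC}_{k,n-1}$ (via deleting $b$ and relabeling $[n]\setminus\{b\}$ order-preservingly as $[n-1]$). (v) For each $c\in[n]$, the vector obtained by sorting the cyclic interval $\{c,c+1,\dots,c+k-1\}$ (entries taken modulo $n$ in $\{1,\dots,n\}$) is noncrossing with every element of $V_{k,n}$; hence these $n$ vectors belong to every maximal face of $\Delta^{NC}_{k,n}$.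
   Context: $[n]=\{1,\dots,n\}$. $V_{k,n}$ denotes the set of integer vectors $I=(i_1,\dots,i_k)$ with $1\le i_1<\dots<i_k\le n$, identified with $k$-subsets of $[n]$. Two arcs $(p<p')$ and $(q<q')$ cross if $p<q<p'<q'$ or $q<p<q'<p'$. Two vectors $I=(i_1,\dots,i_k)$, $J=(j_1,\dots,j_k)\in V_{k,n}$ are noncrossing if for all indices $1\le a<b\le k$ such that $i_\ell=j_\ell$ for all $a<\ell<b$, the arcs $(i_a<i_b)$ and $(j_a<j_b)$ do not cross. The noncrossing complex $\Delta^{NC}_{k,n}$ is the flag simplicial complex with vertex set $V_{k,n}$ whose faces are the sets of pairwise noncrossing vectors. *)

theory Defs
  imports Main
begin

text \<open>Vertices of the noncrossing complex: k-subsets of [n] = {1..n}, identified with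
  increasing integer vectors (the vector of I is sorted_list_of_set I, 0-indexed).\<close>
definition V :: "nat \<Rightarrow> nat \<Rightarrow> nat set set" where
  "V k n = {I. I \<subseteq> {1..n} \<and> card I = k}"

definition arcs_cross :: "nat \<Rightarrow> nat \<Rightarrow> nat \<Rightarrow> nat \<Rightarrow> bool" where
  "arcs_cross p p' q q' \<longleftrightarrow> (p < q \<and> q < p' \<and> p' < q') \<or> (q < p \<and> p < q' \<and> q' < p')"

text \<open>Noncrossing vectors (indices shifted to start at 0).\<close>
definition noncrossing :: "nat set \<Rightarrow> nat set \<Rightarrow> bool" where
  "noncrossing I J \<longleftrightarrow>
     (let xs = sorted_list_of_set I; ys = sorted_list_of_set J in
      \<forall>a b. a < b \<and> b < length xs \<and> b < length ys \<and>
            (\<forall>l. a < l \<and> l < b \<longrightarrow> xs ! l = ys ! l) \<longrightarrow>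
            \<not> arcs_cross (xs ! a) (xs ! b) (ys ! a) (ys ! b))"

definition NC_faces :: "nat \<Rightarrow> nat \<Rightarrow> nat set set set" where
  "NC_faces k n = {F. F \<subseteq> V k n \<and> (\<forall>I\<in>F. \<forall>J\<in>F. noncrossing I J)}"

definition restrict_faces :: "'a set set \<Rightarrow> 'a set \<Rightarrow> 'a set set" where
  "restrict_faces \<Phi> W = {F \<in> \<Phi>. F \<subseteq> W}"

definition simplicial_iso ::
  "('a \<Rightarrow> 'b) \<Rightarrow> 'a set \<Rightarrow> 'a set set \<Rightarrow> 'b set \<Rightarrow> 'b set set \<Rightarrow> bool" where
  "simplicial_iso f V1 \<Phi> V2 \<Psi> \<longleftrightarrow>
     bij_betw f V1 V2 \<and> (\<forall>F. F \<subseteq> V1 \<longrightarrow> (F \<in> \<Phi> \<longleftrightarrow> f ` F \<in> \<Psi>))"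

definition maximal_face :: "'a set set \<Rightarrow> 'a set \<Rightarrow> bool" where
  "maximal_face \<Phi> F \<longleftrightarrow> F \<in> \<Phi> \<and> (\<forall>G\<in>\<Phi>. F \<subseteq> G \<longrightarrow> G = F)"

definition relabel :: "nat set \<Rightarrow> nat \<Rightarrow> nat" where
  "relabel S x = card {y \<in> S. y \<le> x}"

definition del_relabel :: "nat \<Rightarrow> nat \<Rightarrow> nat" where
  "del_relabel b x = (if x < b then x else x - 1)"

definition cyc_interval :: "nat \<Rightarrow> nat \<Rightarrow> nat \<Rightarrow> nat set" where
  "cyc_interval n k c = {(c - 1 + j) mod n + 1 | j. j < k}"

end

theory Submission
  imports Defs
begin


definition cnt :: "nat set \<Rightarrow> nat \<Rightarrow> nat" where
  "cnt X v = card {x\<in>X. x < v}"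

definition XX :: "nat set \<Rightarrow> nat set \<Rightarrow> bool" where
  "XX A B \<longleftrightarrow> (\<exists>u v. u \<in> B \<and> v \<in> A \<and> u < v \<and> (\<forall>w. u < w \<and> w < v \<longrightarrow> w \<notin> A \<and> w \<notin> B)
      \<and> cnt A v = cnt B v)"

lemma SL:
  fixes xs :: "nat list"
  assumes "sorted_wrt (<) xs" "i < length xs" "j < length xs"
  shows "(xs!i < xs!j) \<longleftrightarrow> i < j"
proof
  assume "xs!i<xs!j" then show "i<j" using sorted_wrt_nth_less[OF assms(1), of j i] assms
    by (cases "j < i"; cases "i < j") auto
next
  assume "i<j" then show "xs!i<xs!j" using sorted_wrt_nth_less[OF assms(1)] assms by blast
qed

lemma R1:
  assumes "sorted_wrt (<) xs" "i < length xs"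
  shows "cnt (set xs) (xs!i) = i"
proof -
  have "{x\<in>set xs. x < xs!i} = (!) xs ` {..<i}"
  proof
    show "{x \<in> set xs. x < xs ! i} \<subseteq> (!) xs ` {..<i}"
    proof
      fix x assume "x \<in> {x \<in> set xs. x < xs ! i}"
      then obtain j where j: "j < length xs" "x = xs!j" "xs!j < xs!i" by (auto simp: in_set_conv_nth)
      then have "j < i" using SL assms by blast
      then show "x \<in> (!) xs ` {..<i}" using j by auto
    qed
    show "(!) xs ` {..<i} \<subseteq> {x \<in> set xs. x < xs ! i}"
      using assms by (auto intro: sorted_wrt_nth_less)
  qed
  moreover have "inj_on ((!) xs) {..<i}"
    using assms by (auto simp: inj_on_def nth_eq_iff_index_eq strict_sorted_iff)
  ultimately show ?thesis unfolding cnt_def by (simp add: card_image)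
qed

lemma R2:
  assumes "sorted_wrt (<) xs" "u \<in> set xs"
  shows "cnt (set xs) u < length xs \<and> xs ! (cnt (set xs) u) = u"
proof -
  obtain i where "i < length xs" "u = xs!i" using assms by (auto simp: in_set_conv_nth)
  then show ?thesis using R1[OF assms(1)] by auto
qed

lemma RK:
  assumes "sorted_wrt (<) xs" "i < length xs"
  shows "xs!i < v \<longleftrightarrow> i < cnt (set xs) v"
proof
  assume h: "xs!i < v"
  have sub: "(!) xs ` {..i} \<subseteq> {x\<in>set xs. x < v}"
  proof
    fix x assume "x \<in> (!) xs ` {..i}"
    then obtain j where "j \<le> i" "x = xs!j" by auto
    then show "x \<in> {x\<in>set xs. x < v}" using assms h SL[OF assms(1), of j i]
      by (cases "j = i") auto
  qed
  have inj: "inj_on ((!) xs) {..i}"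
    using assms by (auto simp: inj_on_def nth_eq_iff_index_eq strict_sorted_iff)
  have "card ((!) xs ` {..i}) \<le> card {x\<in>set xs. x < v}"
    by (rule card_mono[OF _ sub]) simp
  then have "card {..i} \<le> card {x\<in>set xs. x < v}" using card_image[OF inj] by simp
  then show "i < cnt (set xs) v" unfolding cnt_def by simp
next
  assume h: "i < cnt (set xs) v"
  show "xs!i < v"
  proof (rule ccontr)
    assume "\<not> xs!i < v"
    have "{x\<in>set xs. x < v} \<subseteq> (!) xs ` {..<i}"
    proof
      fix x assume "x \<in> {x \<in> set xs. x < v}"
      then obtain j where j: "j < length xs" "x = xs!j" "xs!j < v" by (auto simp: in_set_conv_nth)
      then have "xs!j < xs!i" using \<open>\<not> xs!i < v\<close> by simp
      then have "j < i" using SL assms j by blast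
      then show "x \<in> (!) xs ` {..<i}" using j by auto
    qed
    then have "cnt (set xs) v \<le> card ((!) xs ` {..<i})" unfolding cnt_def
      by (simp add: card_mono)
    also have "\<dots> \<le> i" using card_image_le[of "{..<i}" "(!) xs"] by simp
    finally show False using h by simp
  qed
qed

lemma transl:
  assumes "finite I" "finite J"
  shows "cnt I v + cnt (J - I) v = cnt J v + cnt (I - J) v"
proof -
  have a: "{x\<in>I. x<v} = {x\<in>I-J. x<v} \<union> {x\<in>I\<inter>J. x<v}" by auto
  have b: "{x\<in>J. x<v} = {x\<in>J-I. x<v} \<union> {x\<in>I\<inter>J. x<v}" by auto
  have "cnt I v = cnt (I-J) v + cnt (I\<inter>J) v" unfolding cnt_def a
    by (subst card_Un_disjoint) (use assms in auto)
  moreover have "cnt J v = cnt (J-I) v + cnt (I\<inter>J) v" unfolding cnt_def b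
    by (subst card_Un_disjoint) (use assms in auto)
  ultimately show ?thesis by simp
qed

lemma cnt_same:
  assumes "w \<le> v" "\<forall>x. w \<le> x \<and> x < v \<longrightarrow> x \<notin> X"
  shows "cnt X w = cnt X v"
proof -
  have "{x\<in>X. x<w} = {x\<in>X. x<v}"
  proof (intro set_eqI iffI)
    fix x assume "x \<in> {x\<in>X. x<w}" then show "x \<in> {x\<in>X. x<v}" using assms by auto
  next
    fix x assume x: "x \<in> {x\<in>X. x<v}" show "x \<in> {x\<in>X. x<w}"
    proof (cases "x < w")
      case False then show ?thesis using x assms by auto
    qed (use x in auto)
  qed
  then show ?thesis unfolding cnt_def by simp
qed

lemma cnt_suc:
  assumes "finite X" "u \<in> X" "u < v" "\<forall>x. u < x \<and> x < v \<longrightarrow> x \<notin> X"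
  shows "cnt X v = Suc (cnt X u)"
proof -
  have "{x\<in>X. x<v} = insert u {x\<in>X. x<u}"
  proof (intro set_eqI iffI)
    fix x assume x: "x \<in> {x\<in>X. x<v}" show "x \<in> insert u {x\<in>X. x<u}"
    proof (cases "x < u \<or> x = u")
      case False then have "u < x" by auto
      then show ?thesis using x assms by auto
    qed (use x in auto)
  qed (use assms in auto)
  then show ?thesis unfolding cnt_def using assms by simp
qed




lemma L1:
  fixes xs ys :: "nat list"
  assumes sx: "sorted_wrt (<) xs" and sy: "sorted_wrt (<) ys" and len: "length xs = length ys"
    and ab: "a < b" "b < length xs"
    and m: "\<forall>l. a < l \<and> l < b \<longrightarrow> xs!l = ys!l"
    and c1: "xs!a < ys!a" and c2: "ys!a < xs!b" and c3: "xs!b < ys!b"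
  shows "XX (set xs - set ys) (set ys - set xs)"
proof -
  define u where "u = ys!a"
  define v where "v = xs!b"
  have aL: "a < length xs" "a < length ys" "b < length ys" using ab len by auto
  have uI: "u \<notin> set xs"
  proof
    assume "u \<in> set xs"
    then obtain j where j: "j < length xs" "u = xs!j" by (auto simp: in_set_conv_nth)
    have "a < j" using SL[OF sx aL(1) j(1)] c1 j u_def by auto
    have "j < b" using SL[OF sx j(1) ab(2)] c2 j u_def v_def by auto
    have "ys!j = u" using m \<open>a<j\<close> \<open>j<b\<close> j by auto
    moreover have "ys!a < ys!j" using SL[OF sy aL(2), of j] \<open>a<j\<close> \<open>j<b\<close> aL by auto
    ultimately show False using u_def by simp
  qed
  have vJ: "v \<notin> set ys"
  proof
    assume "v \<in> set ys"
    then obtain j where j: "j < length ys" "v = ys!j" by (auto simp: in_set_conv_nth)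
    have "a < j" using SL[OF sy aL(2) j(1)] c2 j u_def v_def by auto
    have "j < b" using SL[OF sy j(1) aL(3)] c3 j v_def by auto
    have "xs!j = v" using m \<open>a<j\<close> \<open>j<b\<close> j by auto
    moreover have "xs!j < xs!b" using SL[OF sx _ ab(2), of j] \<open>j<b\<close> ab by auto
    ultimately show False using v_def by simp
  qed
  have btw: "\<forall>w. u<w \<and> w<v \<longrightarrow> w \<notin> set xs - set ys \<and> w \<notin> set ys - set xs"
  proof (intro allI impI)
    fix w assume w: "u<w \<and> w<v"
    have 1: "w \<in> set ys" if wI: "w \<in> set xs"
    proof -
      from wI obtain j where j: "j < length xs" "w = xs!j" by (auto simp: in_set_conv_nth)
      have "xs!a < u" using c1 u_def by simp
      then have "xs!a < xs!j" using w j(2) by simp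
      then have "a < j" using SL[OF sx aL(1) j(1)] by simp
      have "xs!j < xs!b" using w j(2) v_def by simp
      then have "j < b" using SL[OF sx j(1) ab(2)] by simp
      then have "xs!j = ys!j" "j < length ys" using m \<open>a<j\<close> aL by auto
      then show ?thesis using j(2) by simp
    qed
    have 2: "w \<in> set xs" if wJ: "w \<in> set ys"
    proof -
      from wJ obtain j where j: "j < length ys" "w = ys!j" by (auto simp: in_set_conv_nth)
      have "ys!a < ys!j" using w j(2) u_def by simp
      then have "a < j" using SL[OF sy aL(2) j(1)] by simp
      have "ys!j < ys!b" using w j(2) v_def c3 by simp
      then have "j < b" using SL[OF sy j(1) aL(3)] by simp
      then have "xs!j = ys!j" "j < length xs" using m \<open>a<j\<close> ab by auto
      then show ?thesis using j(2) by (metis nth_mem)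
    qed
    show "w \<notin> set xs - set ys \<and> w \<notin> set ys - set xs" using 1 2 by auto
  qed
  have cI: "cnt (set xs) v = b" using R1[OF sx ab(2)] v_def by simp
  have cJ1: "\<not> b < cnt (set ys) v" using RK[OF sy aL(3), of v] c3 v_def by simp
  have cJ2: "b \<le> cnt (set ys) v"
  proof -
    have "ys!(b-1) < v"
    proof (cases "b - 1 = a")
      case True then show ?thesis using c2 u_def v_def by simp
    next
      case False
      then have "a < b - 1" "b - 1 < b" using ab by auto
      then have "ys!(b-1) = xs!(b-1)" using m by auto
      also have "\<dots> < v" using SL[OF sx _ ab(2), of "b-1"] \<open>b-1<b\<close> ab v_def by auto
      finally show ?thesis .
    qed
    then have "b - 1 < cnt (set ys) v" using RK[OF sy, of "b-1" v] aL by auto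
    then show ?thesis by simp
  qed
  have cJ: "cnt (set ys) v = b" using cJ1 cJ2 by simp
  have ceq: "cnt (set xs - set ys) v = cnt (set ys - set xs) v"
    using transl[of "set xs" "set ys" v] cI cJ by simp
  have uB: "u \<in> set ys - set xs" using uI u_def aL by auto
  have vA: "v \<in> set xs - set ys" using vJ v_def ab by auto
  have "u < v" using c2 u_def v_def by simp
  then show ?thesis unfolding XX_def using uB vA btw ceq by blast
qed

lemma L2:
  fixes xs ys :: "nat list"
  assumes sx: "sorted_wrt (<) xs" and sy: "sorted_wrt (<) ys" and len: "length xs = length ys"
    and uB: "u \<in> set ys - set xs" and vA: "v \<in> set xs - set ys" and uv: "u < v"
    and btw: "\<forall>w. u<w \<and> w<v \<longrightarrow> w \<notin> set xs - set ys \<and> w \<notin> set ys - set xs"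
    and ceq: "cnt (set xs - set ys) v = cnt (set ys - set xs) v"
  shows "\<exists>a b. a<b \<and> b < length xs \<and> (\<forall>l. a<l \<and> l<b \<longrightarrow> xs!l = ys!l)
     \<and> xs!a<ys!a \<and> ys!a<xs!b \<and> xs!b<ys!b"
proof -
  let ?I = "set xs" and ?J = "set ys"
  define a where "a = cnt ?J u"
  define b where "b = cnt ?I v"
  have a1: "a < length ys" "ys!a = u" using R2[OF sy] uB a_def by auto
  have b1: "b < length xs" "xs!b = v" using R2[OF sx] vA b_def by auto
  have cIJv: "cnt ?I v = cnt ?J v" using transl[of ?I ?J v] ceq by simp
  have cAu: "cnt (?I - ?J) u = cnt (?I - ?J) v"
    by (rule cnt_same) (use uv btw uB in \<open>auto simp: le_less\<close>)
  have cBv: "cnt (?J - ?I) v = Suc (cnt (?J - ?I) u)"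
    by (rule cnt_suc) (use uv btw uB in auto)
  have cu: "cnt ?I u = Suc a"
    using transl[of ?I ?J u] cAu cBv ceq a_def by simp
  have cw: "cnt ?I w = cnt ?J w" if "u<w" "w<v" for w
  proof -
    have "cnt (?I - ?J) w = cnt (?I - ?J) v"
      by (rule cnt_same) (use that btw in auto)
    moreover have "cnt (?J - ?I) w = cnt (?J - ?I) v"
      by (rule cnt_same) (use that btw in auto)
    ultimately show ?thesis using transl[of ?I ?J w] ceq by simp
  qed
  have aX: "a < length xs" using a1 len by simp
  have xa: "xs!a < u" using RK[OF sx aX, of u] cu by simp
  have bY: "b < length ys" using b1 len by simp
  have yb: "v < ys!b"
  proof -
    have "\<not> ys!b < v" using RK[OF sy bY, of v] cIJv b_def by simp
    moreover have "ys!b \<noteq> v" using vA bY by auto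
    ultimately show ?thesis by simp
  qed
  have ab: "a < b" using SL[OF sx aX b1(1)] xa uv b1 by simp
  have m: "xs!l = ys!l" if "a<l" "l<b" for l
  proof -
    have lx: "l < length xs" "l < length ys" using that b1 bY by auto
    have "xs!l < v" using SL[OF sx lx(1) b1(1)] that b1 by simp
    moreover have "\<not> xs!l < u" using RK[OF sx lx(1), of u] cu that by simp
    moreover have "xs!l \<noteq> u" using uB lx by auto
    ultimately have w: "u < xs!l" "xs!l < v" by auto
    have wJ: "xs!l \<in> ?J" using btw w lx by auto
    have "cnt ?J (xs!l) = l" using cw[OF w] R1[OF sx lx(1)] by simp
    then show ?thesis using R2[OF sy wJ] by simp
  qed
  have mm: "\<forall>l. a<l \<and> l<b \<longrightarrow> xs!l = ys!l" using m by blast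
  have "xs!a<ys!a \<and> ys!a<xs!b \<and> xs!b<ys!b" using xa a1 b1 uv yb by simp
  then show ?thesis using ab b1 mm by blast
qed

lemma KEY:
  assumes "finite I" "finite J" "card I = card J"
  shows "noncrossing I J \<longleftrightarrow> \<not> XX (I - J) (J - I) \<and> \<not> XX (J - I) (I - J)"
proof -
  define xs where "xs = sorted_list_of_set I"
  define ys where "ys = sorted_list_of_set J"
  have sx: "sorted_wrt (<) xs" "set xs = I" using assms xs_def by auto
  have sy: "sorted_wrt (<) ys" "set ys = J" using assms ys_def by auto
  have len: "length xs = length ys" using assms xs_def ys_def by simp
  have "noncrossing I J \<longleftrightarrow> (\<forall>a b. a < b \<and> b < length xs \<and> b < length ys \<and>
            (\<forall>l. a < l \<and> l < b \<longrightarrow> xs ! l = ys ! l) \<longrightarrow>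
            \<not> arcs_cross (xs ! a) (xs ! b) (ys ! a) (ys ! b))"
    unfolding noncrossing_def xs_def ys_def Let_def by simp
  also have "\<dots> \<longleftrightarrow> \<not> XX (I - J) (J - I) \<and> \<not> XX (J - I) (I - J)"
  proof
    assume H: "\<forall>a b. a < b \<and> b < length xs \<and> b < length ys \<and>
            (\<forall>l. a < l \<and> l < b \<longrightarrow> xs ! l = ys ! l) \<longrightarrow>
            \<not> arcs_cross (xs ! a) (xs ! b) (ys ! a) (ys ! b)"
    show "\<not> XX (I - J) (J - I) \<and> \<not> XX (J - I) (I - J)"
    proof (intro conjI notI)
      assume "XX (I - J) (J - I)"
      then obtain u v where "u \<in> J - I" "v \<in> I - J" "u < v"
        "\<forall>w. u<w \<and> w<v \<longrightarrow> w \<notin> I - J \<and> w \<notin> J - I" "cnt (I - J) v = cnt (J - I) v"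
        unfolding XX_def by blast
      then obtain a b where "a<b \<and> b < length xs \<and> (\<forall>l. a<l \<and> l<b \<longrightarrow> xs!l = ys!l)
         \<and> xs!a<ys!a \<and> ys!a<xs!b \<and> xs!b<ys!b"
        using L2[OF sx(1) sy(1) len, of u v] unfolding sx(2) sy(2) by blast
      then have "arcs_cross (xs ! a) (xs ! b) (ys ! a) (ys ! b)"
            "a < b \<and> b < length xs \<and> b < length ys \<and> (\<forall>l. a < l \<and> l < b \<longrightarrow> xs ! l = ys ! l)"
        using len unfolding arcs_cross_def by auto
      then show False using H by blast
    next
      assume "XX (J - I) (I - J)"
      then obtain u v where "u \<in> I - J" "v \<in> J - I" "u < v"
        "\<forall>w. u<w \<and> w<v \<longrightarrow> w \<notin> J - I \<and> w \<notin> I - J" "cnt (J - I) v = cnt (I - J) v"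
        unfolding XX_def by blast
      then obtain a b where "a<b \<and> b < length ys \<and> (\<forall>l. a<l \<and> l<b \<longrightarrow> ys!l = xs!l)
         \<and> ys!a<xs!a \<and> xs!a<ys!b \<and> ys!b<xs!b"
        using L2[OF sy(1) sx(1) len[symmetric], of u v] unfolding sx(2) sy(2) by blast
      then have "arcs_cross (xs ! a) (xs ! b) (ys ! a) (ys ! b)"
            "a < b \<and> b < length xs \<and> b < length ys \<and> (\<forall>l. a < l \<and> l < b \<longrightarrow> xs ! l = ys ! l)"
        using len unfolding arcs_cross_def by auto
      then show False using H by blast
    qed
  next
    assume H: "\<not> XX (I - J) (J - I) \<and> \<not> XX (J - I) (I - J)"
    show "\<forall>a b. a < b \<and> b < length xs \<and> b < length ys \<and>
            (\<forall>l. a < l \<and> l < b \<longrightarrow> xs ! l = ys ! l) \<longrightarrow>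
            \<not> arcs_cross (xs ! a) (xs ! b) (ys ! a) (ys ! b)"
    proof (intro allI impI notI)
      fix a b assume h: "a < b \<and> b < length xs \<and> b < length ys \<and>
            (\<forall>l. a < l \<and> l < b \<longrightarrow> xs ! l = ys ! l)"
        and c: "arcs_cross (xs ! a) (xs ! b) (ys ! a) (ys ! b)"
      from c show False unfolding arcs_cross_def
      proof (elim disjE conjE)
        assume "xs ! a < ys ! a" "ys ! a < xs ! b" "xs ! b < ys ! b"
        then have "XX (set xs - set ys) (set ys - set xs)"
          using L1[OF sx(1) sy(1) len, of a b] h by blast
        then show False using H sx sy by simp
      next
        assume "ys ! a < xs ! a" "xs ! a < ys ! b" "ys ! b < xs ! b"
        then have "XX (set ys - set xs) (set xs - set ys)"
          using L1[OF sy(1) sx(1) len[symmetric], of a b] h len by simp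
        then show False using H sx sy by simp
      qed
    qed
  qed
  finally show ?thesis .
qed




lemma cnt_img:
  fixes f :: "nat \<Rightarrow> nat"
  assumes mono: "\<forall>x\<in>D. \<forall>y\<in>D. x < y \<longrightarrow> f x < f y" and "X \<subseteq> D" "v \<in> D"
  shows "cnt (f ` X) (f v) = cnt X v"
proof -
  have inj: "inj_on f D"
    unfolding inj_on_def using mono by (metis less_irrefl linorder_neqE_nat)
  have lt: "f x < f v \<longleftrightarrow> x < v" if "x \<in> D" for x
    using mono that assms(3) by (metis less_irrefl linorder_neqE_nat order.asym)
  have "{y\<in>f ` X. y < f v} = f ` {x\<in>X. x < v}"
    using lt assms(2) by auto
  moreover have "inj_on f {x\<in>X. x < v}" by (rule inj_on_subset[OF inj]) (use assms(2) in auto)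
  ultimately show ?thesis unfolding cnt_def by (simp add: card_image)
qed

lemma XX_mono:
  fixes f :: "nat \<Rightarrow> nat"
  assumes mono: "\<forall>x\<in>A\<union>B. \<forall>y\<in>A\<union>B. x < y \<longrightarrow> f x < f y"
  shows "XX (f ` A) (f ` B) \<longleftrightarrow> XX A B"
proof -
  have lt: "f x < f y \<longleftrightarrow> x < y" if "x \<in> A\<union>B" "y \<in> A\<union>B" for x y
    using mono that by (metis less_irrefl linorder_neqE_nat order.asym)
  have inj: "inj_on f (A\<union>B)"
    unfolding inj_on_def using mono by (metis less_irrefl linorder_neqE_nat)
  have cA: "cnt (f ` A) (f v) = cnt A v" if "v \<in> A\<union>B" for v
    by (rule cnt_img[OF mono]) (use that in auto)
  have cB: "cnt (f ` B) (f v) = cnt B v" if "v \<in> A\<union>B" for v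
    by (rule cnt_img[OF mono]) (use that in auto)
  show ?thesis
  proof
    assume "XX (f ` A) (f ` B)"
    then obtain u' v' where h: "u' \<in> f ` B" "v' \<in> f ` A" "u' < v'"
      "\<forall>w. u' < w \<and> w < v' \<longrightarrow> w \<notin> f ` A \<and> w \<notin> f ` B" "cnt (f ` A) v' = cnt (f ` B) v'"
      unfolding XX_def by blast
    then obtain u v where uv: "u \<in> B" "v \<in> A" "u' = f u" "v' = f v" by blast
    have "u < v" using lt[of u v] uv h by auto
    moreover have "\<forall>w. u < w \<and> w < v \<longrightarrow> w \<notin> A \<and> w \<notin> B"
    proof (intro allI impI)
      fix w assume w: "u < w \<and> w < v"
      show "w \<notin> A \<and> w \<notin> B"
      proof (rule ccontr)
        assume "\<not> (w \<notin> A \<and> w \<notin> B)"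
        then have wS: "w \<in> A \<union> B" by auto
        then have "u' < f w \<and> f w < v'" using lt[OF _ wS, of u] lt[OF wS, of v] uv w by auto
        moreover have "f w \<in> f ` A \<or> f w \<in> f ` B" using wS by auto
        ultimately show False using h(4) by blast
      qed
    qed
    moreover have "cnt A v = cnt B v" using h(5) uv cA[of v] cB[of v] by auto
    ultimately show "XX A B" unfolding XX_def using uv by blast
  next
    assume "XX A B"
    then obtain u v where h: "u \<in> B" "v \<in> A" "u < v"
      "\<forall>w. u < w \<and> w < v \<longrightarrow> w \<notin> A \<and> w \<notin> B" "cnt A v = cnt B v"
      unfolding XX_def by blast
    have "f u < f v" using lt[of u v] h by auto
    moreover have "\<forall>w. f u < w \<and> w < f v \<longrightarrow> w \<notin> f ` A \<and> w \<notin> f ` B"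
    proof (intro allI impI)
      fix w assume w: "f u < w \<and> w < f v"
      show "w \<notin> f ` A \<and> w \<notin> f ` B"
      proof (rule ccontr)
        assume "\<not> (w \<notin> f ` A \<and> w \<notin> f ` B)"
        then obtain x where x: "x \<in> A \<union> B" "w = f x" by auto
        then have "u < x \<and> x < v" using lt[OF _ x(1), of u] lt[OF x(1), of v] h w by auto
        then show False using h(4) x by blast
      qed
    qed
    moreover have "cnt (f ` A) (f v) = cnt (f ` B) (f v)" using h(5) h cA[of v] cB[of v] by auto
    ultimately show "XX (f ` A) (f ` B)" unfolding XX_def using h by blast
  qed
qed

lemma cnt_img_anti:
  fixes f :: "nat \<Rightarrow> nat"
  assumes anti: "\<forall>x\<in>D. \<forall>y\<in>D. x < y \<longrightarrow> f y < f x" and "X \<subseteq> D" "v \<in> D"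
  shows "cnt (f ` X) (f v) = card {x\<in>X. v < x}"
proof -
  have inj: "inj_on f D"
    unfolding inj_on_def using anti by (metis less_irrefl linorder_neqE_nat)
  have lt: "f x < f v \<longleftrightarrow> v < x" if "x \<in> D" for x
    using anti that assms(3) by (metis less_irrefl linorder_neqE_nat order.asym)
  have "{y\<in>f ` X. y < f v} = f ` {x\<in>X. v < x}"
    using lt assms(2) by auto
  moreover have "inj_on f {x\<in>X. v < x}" by (rule inj_on_subset[OF inj]) (use assms(2) in auto)
  ultimately show ?thesis unfolding cnt_def by (simp add: card_image)
qed

lemma anti_count:
  assumes fin: "finite A" "finite B" and cAB: "card A = card B"
    and v: "v \<in> A" "v \<notin> B" and u: "u \<in> B" "u \<notin> A" "v < u"
    and btw: "\<forall>w. v < w \<and> w < u \<longrightarrow> w \<notin> A \<and> w \<notin> B"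
  shows "card {x\<in>A. v < x} = card {x\<in>B. v < x} \<longleftrightarrow> cnt B u = cnt A u"
proof -
  have eA: "{x\<in>A. x < u} = {x\<in>A. x \<le> v}"
  proof (intro set_eqI iffI)
    fix x assume x: "x \<in> {x\<in>A. x < u}"
    show "x \<in> {x\<in>A. x \<le> v}"
    proof (rule ccontr)
      assume "x \<notin> {x\<in>A. x \<le> v}" then show False using x btw by auto
    qed
  qed (use u in auto)
  have eB: "{x\<in>B. x < u} = {x\<in>B. x \<le> v}"
  proof (intro set_eqI iffI)
    fix x assume x: "x \<in> {x\<in>B. x < u}"
    show "x \<in> {x\<in>B. x \<le> v}"
    proof (rule ccontr)
      assume "x \<notin> {x\<in>B. x \<le> v}" then show False using x btw by auto
    qed
  qed (use u in auto)
  have sA: "card {x\<in>A. v < x} + card {x\<in>A. x \<le> v} = card A"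
  proof -
    have "A = {x\<in>A. v < x} \<union> {x\<in>A. x \<le> v}" by auto
    then have "card A = card ({x\<in>A. v < x} \<union> {x\<in>A. x \<le> v})" by simp
    also have "\<dots> = card {x\<in>A. v < x} + card {x\<in>A. x \<le> v}"
      by (rule card_Un_disjoint) (use fin in auto)
    finally show ?thesis by simp
  qed
  have sB: "card {x\<in>B. v < x} + card {x\<in>B. x \<le> v} = card B"
  proof -
    have "B = {x\<in>B. v < x} \<union> {x\<in>B. x \<le> v}" by auto
    then have "card B = card ({x\<in>B. v < x} \<union> {x\<in>B. x \<le> v})" by simp
    also have "\<dots> = card {x\<in>B. v < x} + card {x\<in>B. x \<le> v}"
      by (rule card_Un_disjoint) (use fin in auto)
    finally show ?thesis by simp
  qed
  show ?thesis unfolding cnt_def eA eB using sA sB cAB by linarith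
qed

lemma XX_anti:
  fixes f :: "nat \<Rightarrow> nat"
  assumes anti: "\<forall>x\<in>A\<union>B. \<forall>y\<in>A\<union>B. x < y \<longrightarrow> f y < f x"
    and fin: "finite A" "finite B" and cAB: "card A = card B" and dis: "A \<inter> B = {}"
  shows "XX (f ` A) (f ` B) \<longleftrightarrow> XX B A"
proof -
  have lt: "f x < f y \<longleftrightarrow> y < x" if "x \<in> A\<union>B" "y \<in> A\<union>B" for x y
    using anti that by (metis less_irrefl linorder_neqE_nat order.asym)
  have cA: "cnt (f ` A) (f v) = card {x\<in>A. v < x}" if "v \<in> A\<union>B" for v
    by (rule cnt_img_anti[OF anti]) (use that in auto)
  have cB: "cnt (f ` B) (f v) = card {x\<in>B. v < x}" if "v \<in> A\<union>B" for v
    by (rule cnt_img_anti[OF anti]) (use that in auto)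
  show ?thesis
  proof
    assume "XX (f ` A) (f ` B)"
    then obtain u' v' where h: "u' \<in> f ` B" "v' \<in> f ` A" "u' < v'"
      "\<forall>w. u' < w \<and> w < v' \<longrightarrow> w \<notin> f ` A \<and> w \<notin> f ` B" "cnt (f ` A) v' = cnt (f ` B) v'"
      unfolding XX_def by blast
    then obtain u v where uv: "u \<in> B" "v \<in> A" "u' = f u" "v' = f v" by blast
    have vu: "v < u" using lt[of u v] uv h by auto
    have btw: "\<forall>w. v < w \<and> w < u \<longrightarrow> w \<notin> A \<and> w \<notin> B"
    proof (intro allI impI)
      fix w assume w: "v < w \<and> w < u"
      show "w \<notin> A \<and> w \<notin> B"
      proof (rule ccontr)
        assume "\<not> (w \<notin> A \<and> w \<notin> B)"
        then have wS: "w \<in> A \<union> B" by auto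
        then have "u' < f w \<and> f w < v'" using lt[OF _ wS, of u] lt[OF wS, of v] uv w by auto
        moreover have "f w \<in> f ` A \<or> f w \<in> f ` B" using wS by auto
        ultimately show False using h(4) by blast
      qed
    qed
    have "card {x\<in>A. v < x} = card {x\<in>B. v < x}" using h(5) uv cA[of v] cB[of v] by auto
    then have "cnt B u = cnt A u"
      using anti_count[OF fin cAB, of v u] uv dis vu btw by blast
    then show "XX B A" unfolding XX_def using uv vu btw by blast
  next
    assume "XX B A"
    then obtain v u where h: "v \<in> A" "u \<in> B" "v < u"
      "\<forall>w. v < w \<and> w < u \<longrightarrow> w \<notin> B \<and> w \<notin> A" "cnt B u = cnt A u"
      unfolding XX_def by blast
    have "f u < f v" using lt[of u v] h by auto
    moreover have "\<forall>w. f u < w \<and> w < f v \<longrightarrow> w \<notin> f ` A \<and> w \<notin> f ` B"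
    proof (intro allI impI)
      fix w assume w: "f u < w \<and> w < f v"
      show "w \<notin> f ` A \<and> w \<notin> f ` B"
      proof (rule ccontr)
        assume "\<not> (w \<notin> f ` A \<and> w \<notin> f ` B)"
        then obtain x where x: "x \<in> A \<union> B" "w = f x" by auto
        then have "v < x \<and> x < u" using lt[OF _ x(1), of u] lt[OF x(1), of v] h w by auto
        then show False using h(4) x by blast
      qed
    qed
    moreover have "card {x\<in>A. v < x} = card {x\<in>B. v < x}"
      using anti_count[OF fin cAB, of v u] h dis by blast
    then have "cnt (f ` A) (f v) = cnt (f ` B) (f v)" using h cA[of v] cB[of v] by auto
    ultimately show "XX (f ` A) (f ` B)" unfolding XX_def using h by blast
  qed
qed




lemma Vfin: "I \<in> V k n \<Longrightarrow> finite I \<and> card I = k \<and> I \<subseteq> {1..n}"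
  unfolding V_def by (auto intro: finite_subset)

lemma cardDiff: "finite I \<Longrightarrow> finite J \<Longrightarrow> card I = card J \<Longrightarrow> card (I - J) = card (J - I)"
  by (simp add: card_Diff_subset_Int Int_commute)

lemma nc_sym: "finite I \<Longrightarrow> finite J \<Longrightarrow> card I = card J \<Longrightarrow> noncrossing I J \<longleftrightarrow> noncrossing J I"
  using KEY[of I J] KEY[of J I] by auto

lemma iso_gen:
  assumes bij: "bij_betw f W1 W2"
    and nc: "\<forall>I\<in>W1. \<forall>J\<in>W1. noncrossing (f I) (f J) \<longleftrightarrow> noncrossing I J"
  shows "simplicial_iso f W1 {F. F \<subseteq> W1 \<and> (\<forall>I\<in>F. \<forall>J\<in>F. noncrossing I J)}
                          W2 {G. G \<subseteq> W2 \<and> (\<forall>I\<in>G. \<forall>J\<in>G. noncrossing I J)}"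
  unfolding simplicial_iso_def
proof (intro conjI allI impI)
  show "bij_betw f W1 W2" by (rule bij)
  fix F assume F: "F \<subseteq> W1"
  have "f ` W1 = W2" using bij by (rule bij_betw_imp_surj_on)
  then have img: "f ` F \<subseteq> W2" using F by auto
  have "(\<forall>I\<in>f ` F. \<forall>J\<in>f ` F. noncrossing I J) \<longleftrightarrow> (\<forall>I\<in>F. \<forall>J\<in>F. noncrossing I J)"
    using nc F by (auto simp: subset_iff)
  then show "F \<in> {F. F \<subseteq> W1 \<and> (\<forall>I\<in>F. \<forall>J\<in>F. noncrossing I J)} \<longleftrightarrow>
         f ` F \<in> {G. G \<subseteq> W2 \<and> (\<forall>I\<in>G. \<forall>J\<in>G. noncrossing I J)}"
    using F img by auto
qed

lemma restr_eq: "W \<subseteq> V k n \<Longrightarrow>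
  restrict_faces (NC_faces k n) W = {F. F \<subseteq> W \<and> (\<forall>I\<in>F. \<forall>J\<in>F. noncrossing I J)}"
  unfolding restrict_faces_def NC_faces_def by auto

lemma P1: "simplicial_iso (\<lambda>I. (\<lambda>i. n + 1 - i) ` I) (V k n) (NC_faces k n) (V k n) (NC_faces k n)"
proof -
  let ?r = "\<lambda>i::nat. n + 1 - i"
  have anti: "\<forall>x\<in>{1..n}. \<forall>y\<in>{1..n}. x < y \<longrightarrow> ?r y < ?r x" by auto
  have injr: "inj_on ?r {1..n}" by (auto simp: inj_on_def)
  have rr: "?r ` (?r ` I) = I" if "I \<subseteq> {1..n}" for I
  proof -
    have "?r ` (?r ` I) = (\<lambda>x. ?r (?r x)) ` I" by (simp add: image_image)
    also have "\<dots> = (\<lambda>x. x) ` I" by (rule image_cong) (use that in auto)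
    finally show ?thesis by simp
  qed
  have rV: "?r ` I \<in> V k n" if "I \<in> V k n" for I
  proof -
    have I: "finite I" "card I = k" "I \<subseteq> {1..n}" using Vfin[OF that] by auto
    have "?r ` I \<subseteq> {1..n}" using I(3) by (auto simp: subset_iff)
    moreover have "card (?r ` I) = k" using I card_image[OF inj_on_subset[OF injr I(3)]] by simp
    ultimately show ?thesis unfolding V_def by auto
  qed
  have bij: "bij_betw (\<lambda>I. ?r ` I) (V k n) (V k n)"
    by (rule bij_betw_byWitness[where f' = "\<lambda>I. ?r ` I"]) (use rr rV Vfin in auto)
  have nc: "noncrossing (?r ` I) (?r ` J) \<longleftrightarrow> noncrossing I J" if "I \<in> V k n" "J \<in> V k n" for I J
  proof -
    have I: "finite I" "card I = k" "I \<subseteq> {1..n}" using Vfin[OF that(1)] by auto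
    have J: "finite J" "card J = k" "J \<subseteq> {1..n}" using Vfin[OF that(2)] by auto
    have I': "finite (?r ` I)" "card (?r ` I) = k" using Vfin[OF rV[OF that(1)]] by auto
    have J': "finite (?r ` J)" "card (?r ` J) = k" using Vfin[OF rV[OF that(2)]] by auto
    have d1: "?r ` I - ?r ` J = ?r ` (I - J)" using inj_on_image_set_diff[OF injr, of I J] I J by auto
    have d2: "?r ` J - ?r ` I = ?r ` (J - I)" using inj_on_image_set_diff[OF injr, of J I] I J by auto
    have an: "\<forall>x\<in>(I-J)\<union>(J-I). \<forall>y\<in>(I-J)\<union>(J-I). x < y \<longrightarrow> ?r y < ?r x" using I J by auto
    have an2: "\<forall>x\<in>(J-I)\<union>(I-J). \<forall>y\<in>(J-I)\<union>(I-J). x < y \<longrightarrow> ?r y < ?r x" using I J by auto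
    have cd: "card (I - J) = card (J - I)" using cardDiff[of I J] I J by simp
    have x1: "XX (?r ` (I - J)) (?r ` (J - I)) \<longleftrightarrow> XX (J - I) (I - J)"
      by (rule XX_anti[OF an]) (use I J cd in auto)
    have x2: "XX (?r ` (J - I)) (?r ` (I - J)) \<longleftrightarrow> XX (I - J) (J - I)"
      by (rule XX_anti[OF an2]) (use I J cd in auto)
    show ?thesis using KEY[of "?r ` I" "?r ` J"] KEY[of I J] I J I' J' d1 d2 x1 x2 by auto
  qed
  show ?thesis unfolding NC_faces_def
    by (rule iso_gen[OF bij]) (use nc in auto)
qed

lemma P2:
  assumes "k \<le> n"
  shows "simplicial_iso (\<lambda>I. {1..n} - I) (V k n) (NC_faces k n) (V (n - k) n) (NC_faces (n - k) n)
   \<and> (\<forall>I\<in>V k n. \<forall>J\<in>V k n. noncrossing I J \<longleftrightarrow> noncrossing ({1..n} - I) ({1..n} - J))"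
proof -
  have cV: "{1..n} - I \<in> V (n - k) n" if "I \<in> V k n" for I
    using Vfin[OF that] unfolding V_def by (auto simp: card_Diff_subset)
  have cV2: "{1..n} - I \<in> V k n" if "I \<in> V (n - k) n" for I
    using Vfin[OF that] assms unfolding V_def by (auto simp: card_Diff_subset)
  have bij: "bij_betw (\<lambda>I. {1..n} - I) (V k n) (V (n - k) n)"
    by (rule bij_betw_byWitness[where f' = "\<lambda>I. {1..n} - I"])
       (use cV cV2 Vfin in \<open>auto simp: double_diff\<close>)
  have nc: "noncrossing ({1..n} - I) ({1..n} - J) \<longleftrightarrow> noncrossing I J" if "I \<in> V k n" "J \<in> V k n" for I J
  proof -
    have I: "finite I" "card I = k" "I \<subseteq> {1..n}" using Vfin[OF that(1)] by auto
    have J: "finite J" "card J = k" "J \<subseteq> {1..n}" using Vfin[OF that(2)] by auto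
    have I': "finite ({1..n} - I)" "card ({1..n} - I) = n - k" using Vfin[OF cV[OF that(1)]] by auto
    have J': "finite ({1..n} - J)" "card ({1..n} - J) = n - k" using Vfin[OF cV[OF that(2)]] by auto
    have d1: "({1..n} - I) - ({1..n} - J) = J - I" using J by auto
    have d2: "({1..n} - J) - ({1..n} - I) = I - J" using I by auto
    show ?thesis using KEY[of "{1..n} - I" "{1..n} - J"] KEY[of I J] I J I' J' d1 d2 by auto
  qed
  have "simplicial_iso (\<lambda>I. {1..n} - I) (V k n) (NC_faces k n) (V (n - k) n) (NC_faces (n - k) n)"
    unfolding NC_faces_def by (rule iso_gen[OF bij]) (use nc in auto)
  then show ?thesis using nc by auto
qed




lemma rel_mono:
  assumes "finite S" "x \<in> S" "y \<in> S" "x < y"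
  shows "relabel S x < relabel S y"
proof -
  have "y \<in> {z\<in>S. z\<le>y}" "y \<notin> {z\<in>S. z\<le>x}" using assms by auto
  moreover have "{z\<in>S. z\<le>x} \<subseteq> {z\<in>S. z\<le>y}" using assms by auto
  ultimately have p: "{z\<in>S. z \<le> x} \<subset> {z\<in>S. z \<le> y}" by blast
  have "finite {z\<in>S. z \<le> y}" using assms by auto
  then show ?thesis unfolding relabel_def using psubset_card_mono[OF _ p] by blast
qed

lemma rel_range: "finite S \<Longrightarrow> x \<in> S \<Longrightarrow> 1 \<le> relabel S x \<and> relabel S x \<le> card S"
proof -
  assume a: "finite S" "x \<in> S"
  have "0 < card {y \<in> S. y \<le> x}" using a by (subst card_gt_0_iff) auto
  moreover have "card {y \<in> S. y \<le> x} \<le> card S" using a by (intro card_mono) auto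
  ultimately show ?thesis unfolding relabel_def by simp
qed

lemma P3:
  assumes "I \<in> V k n" "J \<in> V k n"
  shows "(let S = (I - J) \<union> (J - I); m = card (I - J) in
           card (J - I) = m
         \<and> relabel S ` (I - J) \<in> V m (2 * m) \<and> relabel S ` (J - I) \<in> V m (2 * m)
         \<and> (noncrossing I J \<longleftrightarrow> noncrossing (relabel S ` (I - J)) (relabel S ` (J - I))))"
proof -
  have I: "finite I" "card I = k" "I \<subseteq> {1..n}" using Vfin[OF assms(1)] by auto
  have J: "finite J" "card J = k" "J \<subseteq> {1..n}" using Vfin[OF assms(2)] by auto
  define A where "A = I - J"
  define B where "B = J - I"
  define S where "S = A \<union> B"
  define m where "m = card A"
  have fin: "finite A" "finite B" "finite S" using I J A_def B_def S_def by auto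
  have cB: "card B = m" using cardDiff[of I J] I J A_def B_def m_def by simp
  have dis: "A \<inter> B = {}" using A_def B_def by auto
  have cS: "card S = 2 * m" using card_Un_disjoint[OF fin(1,2) dis] S_def cB m_def by simp
  have mono: "\<forall>x\<in>S. \<forall>y\<in>S. x < y \<longrightarrow> relabel S x < relabel S y"
    using rel_mono[OF fin(3)] by blast
  have inj: "inj_on (relabel S) S"
    unfolding inj_on_def using mono by (metis less_irrefl linorder_neqE_nat)
  have inV: "relabel S ` X \<in> V m (2 * m)" if "X \<subseteq> S" "card X = m" for X
  proof -
    have "relabel S ` X \<subseteq> {1..2*m}" using rel_range[OF fin(3)] that(1) cS by fastforce
    moreover have "card (relabel S ` X) = m"
      using card_image[OF inj_on_subset[OF inj that(1)]] that(2) by simp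
    ultimately show ?thesis unfolding V_def by auto
  qed
  have vA: "relabel S ` A \<in> V m (2 * m)" by (rule inV) (auto simp: S_def m_def)
  have vB: "relabel S ` B \<in> V m (2 * m)" by (rule inV) (auto simp: S_def cB)
  have fA: "finite (relabel S ` A)" "card (relabel S ` A) = m" using Vfin[OF vA] by auto
  have fB: "finite (relabel S ` B)" "card (relabel S ` B) = m" using Vfin[OF vB] by auto
  have d1: "relabel S ` A - relabel S ` B = relabel S ` A"
    using inj_on_image_set_diff[OF inj, of A B] dis S_def by (simp add: Diff_triv)
  have d2: "relabel S ` B - relabel S ` A = relabel S ` B"
    using inj_on_image_set_diff[OF inj, of B A] dis S_def by (simp add: Diff_triv Int_commute)
  have mono1: "\<forall>x\<in>A\<union>B. \<forall>y\<in>A\<union>B. x < y \<longrightarrow> relabel S x < relabel S y" using mono S_def by simp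
  have mono2: "\<forall>x\<in>B\<union>A. \<forall>y\<in>B\<union>A. x < y \<longrightarrow> relabel S x < relabel S y" using mono S_def by auto
  have "noncrossing I J \<longleftrightarrow> \<not> XX A B \<and> \<not> XX B A"
    using KEY[of I J] I J A_def B_def by simp
  also have "\<dots> \<longleftrightarrow> \<not> XX (relabel S ` A) (relabel S ` B) \<and> \<not> XX (relabel S ` B) (relabel S ` A)"
    using XX_mono[OF mono1] XX_mono[OF mono2] by simp
  also have "\<dots> \<longleftrightarrow> noncrossing (relabel S ` A) (relabel S ` B)"
    using KEY[of "relabel S ` A" "relabel S ` B"] fA fB d1 d2 by simp
  finally have "noncrossing I J \<longleftrightarrow> noncrossing (relabel S ` A) (relabel S ` B)" .
  then show ?thesis unfolding Let_def using cB vA vB A_def B_def S_def m_def by simp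
qed

lemma d_mono: "x \<noteq> b \<Longrightarrow> y \<noteq> b \<Longrightarrow> x < y \<Longrightarrow> del_relabel b x < del_relabel b y"
  unfolding del_relabel_def by auto

lemma NC_del:
  assumes "finite I" "finite J" "card I = card J" "b \<in> I \<longleftrightarrow> b \<in> J"
  shows "noncrossing (del_relabel b ` (I - {b})) (del_relabel b ` (J - {b})) \<longleftrightarrow> noncrossing I J"
proof -
  let ?d = "del_relabel b"
  have inj: "inj_on ?d (UNIV - {b})"
    unfolding inj_on_def del_relabel_def by auto
  have cI: "card (?d ` (I - {b})) = card (I - {b})"
    by (rule card_image[OF inj_on_subset[OF inj]]) auto
  have cJ: "card (?d ` (J - {b})) = card (J - {b})"
    by (rule card_image[OF inj_on_subset[OF inj]]) auto
  have cIJ: "card (I - {b}) = card (J - {b})" using assms by (cases "b \<in> I") auto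
  have e1: "(I - {b}) - (J - {b}) = I - J" using assms(4) by auto
  have e2: "(J - {b}) - (I - {b}) = J - I" using assms(4) by auto
  have d1: "?d ` (I - {b}) - ?d ` (J - {b}) = ?d ` (I - J)"
    using inj_on_image_set_diff[OF inj, of "I - {b}" "J - {b}"] e1 by auto
  have d2: "?d ` (J - {b}) - ?d ` (I - {b}) = ?d ` (J - I)"
    using inj_on_image_set_diff[OF inj, of "J - {b}" "I - {b}"] e2 by auto
  have nb: "x \<noteq> b" if "x \<in> (I-J)\<union>(J-I)" for x using that assms(4) by auto
  have m1: "\<forall>x\<in>(I-J)\<union>(J-I). \<forall>y\<in>(I-J)\<union>(J-I). x < y \<longrightarrow> ?d x < ?d y"
  proof (intro ballI impI)
    fix x y assume "x \<in> (I-J)\<union>(J-I)" "y \<in> (I-J)\<union>(J-I)" "x < y"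
    then show "?d x < ?d y" using d_mono[of x b y] nb by blast
  qed
  have m2: "\<forall>x\<in>(J-I)\<union>(I-J). \<forall>y\<in>(J-I)\<union>(I-J). x < y \<longrightarrow> ?d x < ?d y"
    using m1 by (simp add: Un_commute)
  have "noncrossing I J \<longleftrightarrow> \<not> XX (I - J) (J - I) \<and> \<not> XX (J - I) (I - J)"
    using KEY[of I J] assms by simp
  also have "\<dots> \<longleftrightarrow> \<not> XX (?d ` (I - J)) (?d ` (J - I)) \<and> \<not> XX (?d ` (J - I)) (?d ` (I - J))"
    using XX_mono[OF m1] XX_mono[OF m2] by simp
  also have "\<dots> \<longleftrightarrow> noncrossing (?d ` (I - {b})) (?d ` (J - {b}))"
    using KEY[of "?d ` (I - {b})" "?d ` (J - {b})"] assms cI cJ cIJ d1 d2 by simp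
  finally show ?thesis by simp
qed

lemma P4:
  assumes b: "b \<in> {1..n}" and k: "1 \<le> k"
  shows "simplicial_iso (\<lambda>I. del_relabel b ` (I - {b}))
          {I \<in> V k n. b \<in> I} (restrict_faces (NC_faces k n) {I \<in> V k n. b \<in> I})
          (V (k - 1) (n - 1)) (NC_faces (k - 1) (n - 1))
      \<and> simplicial_iso (\<lambda>I. del_relabel b ` (I - {b}))
          {I \<in> V k n. b \<notin> I} (restrict_faces (NC_faces k n) {I \<in> V k n. b \<notin> I})
          (V k (n - 1)) (NC_faces k (n - 1))"
proof -
  let ?d = "del_relabel b"
  define h where "h x = (if x < b then x else Suc x)" for x
  have dh: "?d (h x) = x" for x unfolding h_def del_relabel_def by auto
  have hd: "h (?d x) = x" if "x \<noteq> b" for x using that unfolding h_def del_relabel_def by auto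
  have hb: "h x \<noteq> b" for x unfolding h_def by auto
  have hr: "h x \<in> {1..n}" if "x \<in> {1..n-1}" for x using that b unfolding h_def by auto
  have dr: "?d x \<in> {1..n-1}" if "x \<in> {1..n}" "x \<noteq> b" for x
    using that b unfolding del_relabel_def by auto
  have injd: "inj_on ?d (UNIV - {b})"
    unfolding inj_on_def del_relabel_def by auto
  have injh: "inj h" unfolding inj_def using dh by metis
  have hdX: "h ` ?d ` X = X" if "b \<notin> X" for X
  proof -
    have "h ` ?d ` X = (\<lambda>x. h (?d x)) ` X" by (simp add: image_image)
    also have "\<dots> = (\<lambda>x. x) ` X"
    proof (rule image_cong)
      fix x assume "x \<in> X" then have "x \<noteq> b" using that by auto
      then show "h (?d x) = x" by (rule hd)
    qed simp
    finally show ?thesis by simp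
  qed
  have dhX: "?d ` h ` X = X" for X
    by (simp add: image_image dh)
  have cd: "card (?d ` X) = card X" if "b \<notin> X" for X
    by (rule card_image[OF inj_on_subset[OF injd]]) (use that in auto)
  have gV: "?d ` (I - {b}) \<in> V (card I - (if b \<in> I then 1 else 0)) (n - 1)" if "I \<subseteq> {1..n}" "finite I" for I
  proof -
    have "?d ` (I - {b}) \<subseteq> {1..n-1}"
    proof
      fix y assume "y \<in> ?d ` (I - {b})"
      then obtain x where x: "x \<in> I" "x \<noteq> b" "y = ?d x" by auto
      have "x \<in> {1..n}" using x(1) that(1) by blast
      then show "y \<in> {1..n-1}" using dr[of x] x by simp
    qed
    moreover have "card (?d ` (I - {b})) = card I - (if b \<in> I then 1 else 0)"
      using cd[of "I - {b}"] that by auto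
    ultimately show ?thesis unfolding V_def by auto
  qed
  have hV: "h ` K \<subseteq> {1..n} \<and> card (h ` K) = card K" if "K \<subseteq> {1..n-1}" for K
    using hr that card_image[OF inj_on_subset[OF injh]] by auto
  have bij1: "bij_betw (\<lambda>I. ?d ` (I - {b})) {I \<in> V k n. b \<in> I} (V (k - 1) (n - 1))"
  proof (rule bij_betw_byWitness[where f' = "\<lambda>K. insert b (h ` K)"])
    show "\<forall>I\<in>{I \<in> V k n. b \<in> I}. insert b (h ` ?d ` (I - {b})) = I"
    proof
      fix I assume "I \<in> {I \<in> V k n. b \<in> I}"
      then have "b \<in> I" by simp
      have "h ` ?d ` (I - {b}) = I - {b}" by (rule hdX) simp
      then show "insert b (h ` ?d ` (I - {b})) = I" using \<open>b \<in> I\<close> by auto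
    qed
    show "\<forall>K\<in>V (k - 1) (n - 1). ?d ` (insert b (h ` K) - {b}) = K"
    proof
      fix K assume "K \<in> V (k - 1) (n - 1)"
      have "insert b (h ` K) - {b} = h ` K" using hb by auto
      then show "?d ` (insert b (h ` K) - {b}) = K" using dhX by simp
    qed
    show "(\<lambda>I. ?d ` (I - {b})) ` {I \<in> V k n. b \<in> I} \<subseteq> V (k - 1) (n - 1)"
    proof
      fix K assume "K \<in> (\<lambda>I. ?d ` (I - {b})) ` {I \<in> V k n. b \<in> I}"
      then obtain I where I: "I \<in> V k n" "b \<in> I" "K = ?d ` (I - {b})" by auto
      show "K \<in> V (k - 1) (n - 1)" using gV[of I] Vfin[OF I(1)] I by simp
    qed
    show "(\<lambda>K. insert b (h ` K)) ` V (k - 1) (n - 1) \<subseteq> {I \<in> V k n. b \<in> I}"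
    proof
      fix I assume "I \<in> (\<lambda>K. insert b (h ` K)) ` V (k - 1) (n - 1)"
      then obtain K where K: "K \<in> V (k - 1) (n - 1)" "I = insert b (h ` K)" by auto
      have K1: "finite K" "card K = k - 1" "K \<subseteq> {1..n-1}" using Vfin[OF K(1)] by auto
      have "b \<notin> h ` K" using hb by auto
      then have "card I = Suc (k - 1)" using K(2) hV[OF K1(3)] K1 by simp
      then show "I \<in> {I \<in> V k n. b \<in> I}" using K hV[OF K1(3)] b k unfolding V_def by auto
    qed
  qed
  have nc1: "\<forall>I\<in>{I \<in> V k n. b \<in> I}. \<forall>J\<in>{I \<in> V k n. b \<in> I}.
     noncrossing (?d ` (I - {b})) (?d ` (J - {b})) \<longleftrightarrow> noncrossing I J"
  proof (intro ballI)
    fix I J assume IJ: "I \<in> {I \<in> V k n. b \<in> I}" "J \<in> {I \<in> V k n. b \<in> I}"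
    show "noncrossing (?d ` (I - {b})) (?d ` (J - {b})) \<longleftrightarrow> noncrossing I J"
      by (rule NC_del) (use IJ Vfin in auto)
  qed
  have iso1: "simplicial_iso (\<lambda>I. ?d ` (I - {b}))
          {I \<in> V k n. b \<in> I} (restrict_faces (NC_faces k n) {I \<in> V k n. b \<in> I})
          (V (k - 1) (n - 1)) (NC_faces (k - 1) (n - 1))"
    unfolding NC_faces_def[of "k-1"] restr_eq[of "{I \<in> V k n. b \<in> I}" k n, simplified]
    by (rule iso_gen[OF bij1 nc1])
  have bij2: "bij_betw (\<lambda>I. ?d ` (I - {b})) {I \<in> V k n. b \<notin> I} (V k (n - 1))"
  proof (rule bij_betw_byWitness[where f' = "\<lambda>K. h ` K"])
    show "\<forall>I\<in>{I \<in> V k n. b \<notin> I}. h ` ?d ` (I - {b}) = I"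
    proof
      fix I assume "I \<in> {I \<in> V k n. b \<notin> I}"
      then have "b \<notin> I" by simp
      have "h ` ?d ` (I - {b}) = I - {b}" by (rule hdX) simp
      then show "h ` ?d ` (I - {b}) = I" using \<open>b \<notin> I\<close> by auto
    qed
    show "\<forall>K\<in>V k (n - 1). ?d ` (h ` K - {b}) = K"
    proof
      fix K assume "K \<in> V k (n - 1)"
      have "h ` K - {b} = h ` K" using hb by auto
      then show "?d ` (h ` K - {b}) = K" using dhX by simp
    qed
    show "(\<lambda>I. ?d ` (I - {b})) ` {I \<in> V k n. b \<notin> I} \<subseteq> V k (n - 1)"
    proof
      fix K assume "K \<in> (\<lambda>I. ?d ` (I - {b})) ` {I \<in> V k n. b \<notin> I}"
      then obtain I where I: "I \<in> V k n" "b \<notin> I" "K = ?d ` (I - {b})" by auto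
      show "K \<in> V k (n - 1)" using gV[of I] Vfin[OF I(1)] I by simp
    qed
    show "(\<lambda>K. h ` K) ` V k (n - 1) \<subseteq> {I \<in> V k n. b \<notin> I}"
    proof
      fix I assume "I \<in> (\<lambda>K. h ` K) ` V k (n - 1)"
      then obtain K where K: "K \<in> V k (n - 1)" "I = h ` K" by auto
      have K1: "finite K" "card K = k" "K \<subseteq> {1..n-1}" using Vfin[OF K(1)] by auto
      show "I \<in> {I \<in> V k n. b \<notin> I}" using K hV[OF K1(3)] K1 hb unfolding V_def by auto
    qed
  qed
  have nc2: "\<forall>I\<in>{I \<in> V k n. b \<notin> I}. \<forall>J\<in>{I \<in> V k n. b \<notin> I}.
     noncrossing (?d ` (I - {b})) (?d ` (J - {b})) \<longleftrightarrow> noncrossing I J"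
  proof (intro ballI)
    fix I J assume IJ: "I \<in> {I \<in> V k n. b \<notin> I}" "J \<in> {I \<in> V k n. b \<notin> I}"
    show "noncrossing (?d ` (I - {b})) (?d ` (J - {b})) \<longleftrightarrow> noncrossing I J"
      by (rule NC_del) (use IJ Vfin in auto)
  qed
  have iso2: "simplicial_iso (\<lambda>I. ?d ` (I - {b}))
          {I \<in> V k n. b \<notin> I} (restrict_faces (NC_faces k n) {I \<in> V k n. b \<notin> I})
          (V k (n - 1)) (NC_faces k (n - 1))"
    unfolding NC_faces_def[of k "n-1"] restr_eq[of "{I \<in> V k n. b \<notin> I}" k n, simplified]
    by (rule iso_gen[OF bij2 nc2])
  show ?thesis using iso1 iso2 by simp
qed




lemma cyc_val:
  fixes c n k j :: nat
  assumes c: "c \<in> {1..n}" and kn: "k < n" and j: "j < k"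
  shows "(c - 1 + j) mod n + 1 = (if c + j \<le> n then c + j else c + j - n)"
proof (cases "c + j \<le> n")
  case True
  moreover have "1 \<le> c" using c by simp
  ultimately have "c - 1 + j < n" by arith
  then have "(c - 1 + j) mod n = c - 1 + j" by simp
  then show ?thesis using True c by auto
next
  case False
  have ge: "n \<le> c - 1 + j" using False c by auto
  have lt: "c - 1 + j - n < n" using c j kn by auto
  have "(c - 1 + j) mod n = (c - 1 + j - n) mod n" using ge by (simp add: le_mod_geq)
  also have "\<dots> = c - 1 + j - n" using lt by simp
  finally show ?thesis using False c by auto
qed

lemma cyc_eq:
  assumes c: "c \<in> {1..n}" and kn: "k < n"
  shows "cyc_interval n k c = (\<lambda>j. if c + j \<le> n then c + j else c + j - n) ` {..<k}"
proof -
  have "cyc_interval n k c = (\<lambda>j. (c - 1 + j) mod n + 1) ` {..<k}"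
    unfolding cyc_interval_def by auto
  also have "\<dots> = (\<lambda>j. if c + j \<le> n then c + j else c + j - n) ` {..<k}"
  proof (rule image_cong)
    fix x assume "x \<in> {..<k}"
    then show "(c - 1 + x) mod n + 1 = (if c + x \<le> n then c + x else c + x - n)"
      using cyc_val[OF c kn, of x] by simp
  qed simp
  finally show ?thesis .
qed

lemma cyc_card:
  assumes c: "c \<in> {1..n}" and kn: "k < n"
  shows "card (cyc_interval n k c) = k"
proof -
  have inj: "inj_on (\<lambda>j. if c + j \<le> n then c + j else c + j - n) {..<k}"
    unfolding inj_on_def using kn by (auto split: if_splits)
  show ?thesis unfolding cyc_eq[OF c kn] card_image[OF inj] by simp
qed

lemma cyc_mem:
  assumes c: "c \<in> {1..n}" and kn: "k < n"
  shows "x \<in> cyc_interval n k c \<longleftrightarrow> (1 \<le> x \<and> x \<le> n \<and> (c \<le> x \<and> x < c + k \<or> x + n < c + k))"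
proof -
  let ?g = "\<lambda>j. if c + j \<le> n then c + j else c + j - n"
  have c1: "1 \<le> c" "c \<le> n" using c by auto
  have "x \<in> ?g ` {..<k} \<longleftrightarrow> (1 \<le> x \<and> x \<le> n \<and> (c \<le> x \<and> x < c + k \<or> x + n < c + k))"
  proof
    assume "x \<in> ?g ` {..<k}"
    then obtain j where j: "j < k" "x = ?g j" by auto
    show "1 \<le> x \<and> x \<le> n \<and> (c \<le> x \<and> x < c + k \<or> x + n < c + k)"
    proof (cases "c + j \<le> n")
      case True
      then have "x = c + j" using j by simp
      then show ?thesis using True j c1 by simp
    next
      case False
      then have "x = c + j - n" using j by simp
      then have e: "x + n = c + j" using False by simp
      have "1 \<le> x" using e False by linarith
      moreover have "x \<le> n" using e c1 j kn by linarith
      moreover have "x + n < c + k" using e j by linarith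
      ultimately show ?thesis by blast
    qed
  next
    assume h: "1 \<le> x \<and> x \<le> n \<and> (c \<le> x \<and> x < c + k \<or> x + n < c + k)"
    show "x \<in> ?g ` {..<k}"
    proof (cases "c \<le> x \<and> x < c + k")
      case True
      have e: "c + (x - c) = x" using True by arith
      have "x = ?g (x - c)" using e h by simp
      moreover have "x - c \<in> {..<k}" using True by simp arith
      ultimately show ?thesis by (rule image_eqI)
    next
      case False
      then have x: "x + n < c + k" using h by blast
      have e: "c + (x + n - c) = x + n" using x h c1 by arith
      have nle: "\<not> x + n \<le> n" using h by arith
      have g: "?g (x + n - c) = x" using e nle by simp
      have lk: "x + n - c < k" using x h c1 by arith
      have "x = ?g (x + n - c)" using g by simp
      moreover have "x + n - c \<in> {..<k}" using lk by simp
      ultimately show ?thesis by (rule image_eqI)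
    qed
  qed
  then show ?thesis using cyc_eq[OF c kn] by simp
qed

lemma NW:
  assumes fin: "finite A" "finite B" and cAB: "card A = card B"
    and hA: "\<forall>a\<in>A. s \<le> a \<and> a < t" and hB: "\<forall>x\<in>B. x < s \<or> t \<le> x"
  shows "\<not> XX A B \<and> \<not> XX B A"
proof (intro conjI notI)
  assume "XX A B"
  then obtain u v where h: "u \<in> B" "v \<in> A" "u < v"
      "\<forall>w. u < w \<and> w < v \<longrightarrow> w \<notin> A \<and> w \<notin> B" "cnt A v = cnt B v"
    unfolding XX_def by blast
  have vt: "v < t" using hA h(2) by blast
  have "u < s \<or> t \<le> u" using hB h(1) by blast
  then have us: "u < s" using vt h(3) by auto
  have "{x\<in>A. x < v} = {}"
  proof (rule ccontr)
    assume "{x\<in>A. x < v} \<noteq> {}"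
    then obtain a where a: "a \<in> A" "a < v" by auto
    have "s \<le> a" using hA a(1) by blast
    then have "u < a" using us by simp
    then show False using h(4) a by blast
  qed
  then have cA0: "cnt A v = 0" unfolding cnt_def by simp
  have "u \<in> {x\<in>B. x < v}" using h(1) h(3) by simp
  then have "{x\<in>B. x < v} \<noteq> {}" by blast
  moreover have "finite {x\<in>B. x < v}" using fin(2) by simp
  ultimately have "cnt B v > 0" unfolding cnt_def using card_gt_0_iff by blast
  then show False using h(5) cA0 by simp
next
  assume "XX B A"
  then obtain u v where h: "u \<in> A" "v \<in> B" "u < v"
      "\<forall>w. u < w \<and> w < v \<longrightarrow> w \<notin> B \<and> w \<notin> A" "cnt B v = cnt A v"
    unfolding XX_def by blast
  have su: "s \<le> u" using hA h(1) by blast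
  have "v < s \<or> t \<le> v" using hB h(2) by blast
  then have tv: "t \<le> v" using su h(3) by auto
  have "{x\<in>A. x < v} = A"
  proof
    show "A \<subseteq> {x\<in>A. x < v}"
    proof
      fix a assume a: "a \<in> A"
      then have "a < t" using hA by blast
      then show "a \<in> {x\<in>A. x < v}" using a tv by simp
    qed
  qed auto
  then have "cnt A v = card A" unfolding cnt_def by simp
  moreover have p: "{x \<in> B. x < v} \<subset> B" using h(2) by blast
  have "cnt B v < card B" unfolding cnt_def using psubset_card_mono[OF fin(2) p] .
  ultimately show False using h(5) cAB by simp
qed

lemma P5:
  assumes k1: "1 \<le> k" and kn: "k < n" and c: "c \<in> {1..n}"
  shows "cyc_interval n k c \<in> V k n
      \<and> (\<forall>I\<in>V k n. noncrossing (cyc_interval n k c) I)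
      \<and> (\<forall>F. maximal_face (NC_faces k n) F \<longrightarrow> cyc_interval n k c \<in> F)"
proof -
  let ?C = "cyc_interval n k c"
  have sub: "?C \<subseteq> {1..n}"
  proof
    fix x assume "x \<in> ?C" then show "x \<in> {1..n}" using cyc_mem[OF c kn, of x] by simp
  qed
  have CV: "?C \<in> V k n" unfolding V_def using cyc_card[OF c kn] sub by simp
  have C: "finite ?C" "card ?C = k" "?C \<subseteq> {1..n}" using Vfin[OF CV] by auto
  have nc: "noncrossing ?C I" if IV: "I \<in> V k n" for I
  proof -
    have I: "finite I" "card I = k" "I \<subseteq> {1..n}" using Vfin[OF IV] by auto
    have fin: "finite (?C - I)" "finite (I - ?C)" using C I by auto
    have cd: "card (?C - I) = card (I - ?C)" using cardDiff[of ?C I] C I by simp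
    have "\<not> XX (?C - I) (I - ?C) \<and> \<not> XX (I - ?C) (?C - I)"
    proof (cases "c + k \<le> n + 1")
      case True
      show ?thesis
      proof (rule NW[OF fin cd, of c "c + k"])
        show "\<forall>a\<in>?C - I. c \<le> a \<and> a < c + k"
        proof
          fix a assume a: "a \<in> ?C - I"
          then have m: "1 \<le> a \<and> a \<le> n \<and> (c \<le> a \<and> a < c + k \<or> a + n < c + k)"
            using cyc_mem[OF c kn, of a] by simp
          show "c \<le> a \<and> a < c + k"
          proof (cases "c \<le> a \<and> a < c + k")
            case False
            then have "a + n < c + k" using m by blast
            then show ?thesis using True m by linarith
          qed
        qed
        show "\<forall>x\<in>I - ?C. x < c \<or> c + k \<le> x"
        proof
          fix x assume x: "x \<in> I - ?C"
          then have "x \<in> {1..n}" using I by auto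
          moreover have "\<not> (1 \<le> x \<and> x \<le> n \<and> (c \<le> x \<and> x < c + k \<or> x + n < c + k))"
            using x cyc_mem[OF c kn, of x] by blast
          ultimately have "\<not> (c \<le> x \<and> x < c + k)" by simp
          then show "x < c \<or> c + k \<le> x" by linarith
        qed
      qed
    next
      case False
      have "\<not> XX (I - ?C) (?C - I) \<and> \<not> XX (?C - I) (I - ?C)"
      proof (rule NW[OF fin(2,1) cd[symmetric], of "c + k - n" c])
        show "\<forall>a\<in>I - ?C. c + k - n \<le> a \<and> a < c"
        proof
          fix x assume x: "x \<in> I - ?C"
          then have "x \<in> {1..n}" using I by auto
          moreover have "\<not> (1 \<le> x \<and> x \<le> n \<and> (c \<le> x \<and> x < c + k \<or> x + n < c + k))"
            using x cyc_mem[OF c kn, of x] by blast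
          ultimately have n1: "\<not> (c \<le> x \<and> x < c + k)" and n2: "\<not> x + n < c + k" by simp_all
          have xn: "x \<le> n" using \<open>x \<in> {1..n}\<close> by simp
          have "x < c"
          proof (rule ccontr)
            assume "\<not> x < c" then have "\<not> x < c + k" using n1 by simp
            then show False using xn \<open>\<not> c + k \<le> n + 1\<close> by linarith
          qed
          moreover have "c + k - n \<le> x" using n2 by arith
          ultimately show "c + k - n \<le> x \<and> x < c" by simp
        qed
        show "\<forall>x\<in>?C - I. x < c + k - n \<or> c \<le> x"
        proof
          fix a assume a: "a \<in> ?C - I"
          then have m: "1 \<le> a \<and> a \<le> n \<and> (c \<le> a \<and> a < c + k \<or> a + n < c + k)"
            using cyc_mem[OF c kn, of a] by simp
          show "a < c + k - n \<or> c \<le> a"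
          proof (cases "c \<le> a")
            case False
            then have "a + n < c + k" using m by simp
            then show ?thesis by arith
          qed simp
        qed
      qed
      then show ?thesis by simp
    qed
    then show ?thesis using KEY[of ?C I] C I by simp
  qed
  have mf: "?C \<in> F" if mF: "maximal_face (NC_faces k n) F" for F
  proof -
    have F: "F \<in> NC_faces k n" "\<forall>G\<in>NC_faces k n. F \<subseteq> G \<longrightarrow> G = F"
      using mF unfolding maximal_face_def by auto
    have FV: "F \<subseteq> V k n" "\<forall>I\<in>F. \<forall>J\<in>F. noncrossing I J" using F(1) unfolding NC_faces_def by auto
    have "insert ?C F \<in> NC_faces k n"
      unfolding NC_faces_def
    proof (intro CollectI conjI ballI)
      show "insert ?C F \<subseteq> V k n" using FV CV by auto
      fix I J assume IJ: "I \<in> insert ?C F" "J \<in> insert ?C F"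
      show "noncrossing I J"
      proof (cases "I = ?C")
        case True
        have "J \<in> V k n" using IJ(2) FV(1) CV by blast
        then show ?thesis using nc True by blast
      next
        case False
        then have IF: "I \<in> F" using IJ by auto
        show ?thesis
        proof (cases "J = ?C")
          case True
          have IV: "I \<in> V k n" using IF FV by auto
          have "noncrossing ?C I" using nc[OF IV] .
          moreover have "noncrossing I ?C \<longleftrightarrow> noncrossing ?C I"
            using nc_sym[of I ?C] Vfin[OF IV] C by simp
          ultimately show ?thesis using True by simp
        next
          case False
          then have "J \<in> F" using IJ by blast
          then show ?thesis using IF FV(2) by blast
        qed
      qed
    qed
    then have "insert ?C F = F" using F(2) by blast
    then show ?thesis by blast
  qed
  have a1: "\<forall>I\<in>V k n. noncrossing ?C I" using nc by blast
  have a2: "\<forall>F. maximal_face (NC_faces k n) F \<longrightarrow> ?C \<in> F" using mf by blast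
  show ?thesis using CV a1 a2 by simp
qed




theorem proposition1p5:
  fixes k n :: nat
  assumes "1 \<le> k" and "k \<le> n - 1"
  shows
    \<comment> \<open>(i)\<close>
    "simplicial_iso (\<lambda>I. (\<lambda>i. n + 1 - i) ` I) (V k n) (NC_faces k n) (V k n) (NC_faces k n)
     \<comment> \<open>(ii)\<close>
   \<and> simplicial_iso (\<lambda>I. {1..n} - I) (V k n) (NC_faces k n) (V (n - k) n) (NC_faces (n - k) n)
   \<and> (\<forall>I\<in>V k n. \<forall>J\<in>V k n. noncrossing I J \<longleftrightarrow> noncrossing ({1..n} - I) ({1..n} - J))
     \<comment> \<open>(iii)\<close>
   \<and> (\<forall>I\<in>V k n. \<forall>J\<in>V k n. I \<noteq> J \<longrightarrow>
        (let S = (I - J) \<union> (J - I); m = card (I - J) in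
           card (J - I) = m
         \<and> relabel S ` (I - J) \<in> V m (2 * m) \<and> relabel S ` (J - I) \<in> V m (2 * m)
         \<and> (noncrossing I J \<longleftrightarrow> noncrossing (relabel S ` (I - J)) (relabel S ` (J - I)))))
     \<comment> \<open>(iv)\<close>
   \<and> (\<forall>b\<in>{1..n}.
        simplicial_iso (\<lambda>I. del_relabel b ` (I - {b}))
          {I \<in> V k n. b \<in> I} (restrict_faces (NC_faces k n) {I \<in> V k n. b \<in> I})
          (V (k - 1) (n - 1)) (NC_faces (k - 1) (n - 1))
      \<and> simplicial_iso (\<lambda>I. del_relabel b ` (I - {b}))
          {I \<in> V k n. b \<notin> I} (restrict_faces (NC_faces k n) {I \<in> V k n. b \<notin> I})
          (V k (n - 1)) (NC_faces k (n - 1)))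
     \<comment> \<open>(v)\<close>
   \<and> (\<forall>c\<in>{1..n}.
        cyc_interval n k c \<in> V k n
      \<and> (\<forall>I\<in>V k n. noncrossing (cyc_interval n k c) I)
      \<and> (\<forall>F. maximal_face (NC_faces k n) F \<longrightarrow> cyc_interval n k c \<in> F))"
proof -
  have kn: "k < n" and kn': "k \<le> n" using assms by auto
  have p1: "simplicial_iso (\<lambda>I. (\<lambda>i. n + 1 - i) ` I) (V k n) (NC_faces k n) (V k n) (NC_faces k n)"
    by (rule P1)
  have p2: "simplicial_iso (\<lambda>I. {1..n} - I) (V k n) (NC_faces k n) (V (n - k) n) (NC_faces (n - k) n)
   \<and> (\<forall>I\<in>V k n. \<forall>J\<in>V k n. noncrossing I J \<longleftrightarrow> noncrossing ({1..n} - I) ({1..n} - J))"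
    by (rule P2[OF kn'])
  have p3: "\<forall>I\<in>V k n. \<forall>J\<in>V k n. I \<noteq> J \<longrightarrow>
        (let S = (I - J) \<union> (J - I); m = card (I - J) in
           card (J - I) = m
         \<and> relabel S ` (I - J) \<in> V m (2 * m) \<and> relabel S ` (J - I) \<in> V m (2 * m)
         \<and> (noncrossing I J \<longleftrightarrow> noncrossing (relabel S ` (I - J)) (relabel S ` (J - I))))"
  proof (intro ballI impI)
    fix I J assume "I \<in> V k n" "J \<in> V k n"
    then show "let S = (I - J) \<union> (J - I); m = card (I - J) in
           card (J - I) = m
         \<and> relabel S ` (I - J) \<in> V m (2 * m) \<and> relabel S ` (J - I) \<in> V m (2 * m)
         \<and> (noncrossing I J \<longleftrightarrow> noncrossing (relabel S ` (I - J)) (relabel S ` (J - I)))"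
      by (rule P3)
  qed
  have p4: "\<forall>b\<in>{1..n}.
        simplicial_iso (\<lambda>I. del_relabel b ` (I - {b}))
          {I \<in> V k n. b \<in> I} (restrict_faces (NC_faces k n) {I \<in> V k n. b \<in> I})
          (V (k - 1) (n - 1)) (NC_faces (k - 1) (n - 1))
      \<and> simplicial_iso (\<lambda>I. del_relabel b ` (I - {b}))
          {I \<in> V k n. b \<notin> I} (restrict_faces (NC_faces k n) {I \<in> V k n. b \<notin> I})
          (V k (n - 1)) (NC_faces k (n - 1))"
  proof
    fix b assume "b \<in> {1..n}"
    then show "simplicial_iso (\<lambda>I. del_relabel b ` (I - {b}))
          {I \<in> V k n. b \<in> I} (restrict_faces (NC_faces k n) {I \<in> V k n. b \<in> I})
          (V (k - 1) (n - 1)) (NC_faces (k - 1) (n - 1))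
      \<and> simplicial_iso (\<lambda>I. del_relabel b ` (I - {b}))
          {I \<in> V k n. b \<notin> I} (restrict_faces (NC_faces k n) {I \<in> V k n. b \<notin> I})
          (V k (n - 1)) (NC_faces k (n - 1))"
      by (rule P4[OF _ assms(1)])
  qed
  have p5: "\<forall>c\<in>{1..n}.
        cyc_interval n k c \<in> V k n
      \<and> (\<forall>I\<in>V k n. noncrossing (cyc_interval n k c) I)
      \<and> (\<forall>F. maximal_face (NC_faces k n) F \<longrightarrow> cyc_interval n k c \<in> F)"
  proof
    fix c assume "c \<in> {1..n}"
    then show "cyc_interval n k c \<in> V k n
      \<and> (\<forall>I\<in>V k n. noncrossing (cyc_interval n k c) I)
      \<and> (\<forall>F. maximal_face (NC_faces k n) F \<longrightarrow> cyc_interval n k c \<in> F)"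
      by (rule P5[OF assms(1) kn])
  qed
  show ?thesis using p1 p2 p3 p4 p5 by (intro conjI) blast+
qed


end
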